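(* Let $\rho \in L^1(\mathbb{R}^n)$ be a probability density whose support is the whole of $\mathbb{R}^n$, and let $E \subseteq \mathbb{R}^n$ be a bounded measurable set. For a finite set $P \subseteq \mathbb{R}^n$, let $D_E = \max\{\operatorname{diam} C(p) : p \in P,\ C(p) \cap E \neq \emptyset\}$ be the maximum diameter of a Voronoi cell of $P$ intersecting $E$. Then, regarded as a random variable in $P \sim \rho^m$ ($m$ i.i.d. samples from $\rho$), $D_E$ converges in probability to $0$ as $m \to \infty$.
   Context: For a finite set $P \subseteq \mathbb{R}^n$ of distinct points and Euclidean distance $d$, the Voronoi cell of $p \in P$ is $C(p) = \{x \in \mathbb{R}^n : d(x,q) \geq d(x,p) \text{ for all } q \in P\}$; $\operatorname{diam}$ denotes the supremum of pairwise distances (possibly $+\infty$). *)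

theory Defs
  imports "HOL-Probability.Probability"
begin

definition voronoi_cell :: "'a::euclidean_space set \<Rightarrow> 'a \<Rightarrow> 'a set" where
  "voronoi_cell P p = {x. \<forall>q\<in>P. dist x q \<ge> dist x p}"

definition ediam :: "'a::metric_space set \<Rightarrow> ereal" where
  "ediam S = Sup {ereal (dist x y) | x y. x \<in> S \<and> y \<in> S}"

text \<open>Maximal diameter of a Voronoi cell of P meeting E (Sup of the empty set is -infinity).\<close>
definition max_cell_diam :: "'a::euclidean_space set \<Rightarrow> 'a set \<Rightarrow> ereal" where
  "max_cell_diam E P = Sup {ediam (voronoi_cell P p) | p. p \<in> P \<and> voronoi_cell P p \<inter> E \<noteq> {}}"

end

theory Submission
  imports Defs
begin

lemma cell_small:
  fixes P :: "'a::euclidean_space set"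
  assumes E: "E \<subseteq> cball 0 R" and d: "\<delta> > 0"
    and dense: "\<forall>w. norm w \<le> R + 3*\<delta> \<longrightarrow> (\<exists>q\<in>P. dist w q < \<delta>)"
    and p: "p \<in> P" and x: "x \<in> voronoi_cell P p" "x \<in> E" and y: "y \<in> voronoi_cell P p"
  shows "dist y p \<le> 2*\<delta>"
proof (rule ccontr)
  assume ny: "\<not> dist y p \<le> 2*\<delta>"
  have nx: "norm x \<le> R" using E x by (auto simp: dist_norm)
  then obtain q where q: "q \<in> P" "dist x q < \<delta>" using dense d by force
  have "dist x p \<le> dist x q" using x q unfolding voronoi_cell_def by auto
  hence dxp: "dist x p < \<delta>" using q by linarith
  have np: "norm p \<le> R + \<delta>" using nx dxp norm_triangle_ineq[of x "p - x"]
    by (simp add: dist_norm norm_minus_commute)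
  define t where "t = 2*\<delta> / dist y p"
  have dyp: "dist y p > 0" using ny d by linarith
  have t01: "0 < t" "t < 1" using ny d dyp by (auto simp: t_def field_simps)
  define z where "z = p + t *\<^sub>R (y - p)"
  have dzp: "norm (z - p) = 2*\<delta>" using t01 dyp d
    by (simp add: z_def t_def dist_norm)
  have "norm z \<le> norm p + norm (z - p)" using norm_triangle_ineq[of p "z - p"] by simp
  hence "norm z \<le> R + 3*\<delta>" using np dzp by linarith
  then obtain q' where q': "q' \<in> P" "dist z q' < \<delta>" using dense by force
  have "dist y p \<le> dist y q'" using y q' unfolding voronoi_cell_def by auto
  also have "\<dots> \<le> dist y z + dist z q'" by (rule dist_triangle)
  also have "dist y z = (1 - t) * dist y p"
  proof -
    have "y - z = (1 - t) *\<^sub>R (y - p)" by (simp add: z_def algebra_simps)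
    thus ?thesis using t01 by (simp add: dist_norm)
  qed
  finally have "t * dist y p \<le> dist z q'" by (simp add: algebra_simps)
  moreover have "t * dist y p = 2*\<delta>" using dyp by (simp add: t_def)
  ultimately show False using q' d by linarith
qed

lemma pow_set:
  fixes M :: "'b measure" and m :: nat
  assumes "prob_space M" "S \<in> sets M"
  shows "{x\<in>space (PiM {..<m} (\<lambda>_. M)). \<forall>i\<in>{..<m}. x i \<in> S} \<in> sets (PiM {..<m} (\<lambda>_. M))"
    and "measure (PiM {..<m} (\<lambda>_. M)) {x\<in>space (PiM {..<m} (\<lambda>_. M)). \<forall>i\<in>{..<m}. x i \<in> S}
         = measure M S ^ m"
proof -
  interpret prob_space M by fact
  interpret PP: product_prob_space "\<lambda>_. M" "{..<m}"
    by (simp add: product_prob_space_def product_prob_space_axioms_def product_sigma_finite_def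
        assms(1) sigma_finite_measure_axioms)
  show "{x\<in>space (PiM {..<m} (\<lambda>_. M)). \<forall>i\<in>{..<m}. x i \<in> S} \<in> sets (PiM {..<m} (\<lambda>_. M))"
    using assms(2) by measurable
  have "emeasure (PiM {..<m} (\<lambda>_. M)) {x\<in>space (PiM {..<m} (\<lambda>_. M)). \<forall>i\<in>{..<m}. x i \<in> S}
      = (\<Prod>i\<in>{..<m}. emeasure M S)"
    using assms(2) by (intro PP.emeasure_PiM_Collect) auto
  thus "measure (PiM {..<m} (\<lambda>_. M)) {x\<in>space (PiM {..<m} (\<lambda>_. M)). \<forall>i\<in>{..<m}. x i \<in> S}
         = measure M S ^ m"
    by (simp add: PP.P.emeasure_eq_measure emeasure_eq_measure prod_ennreal ennreal_power)
qed

theorem mainTheorem4: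
  fixes \<rho> :: "'a::euclidean_space \<Rightarrow> real" and E :: "'a set"
  assumes "\<rho> \<in> borel_measurable lborel"
    and "\<forall>x. \<rho> x \<ge> 0"
    and "integrable lborel \<rho>"
    and "integral\<^sup>L lborel \<rho> = 1"
    and "\<forall>x. \<forall>e>0. emeasure (density lborel (\<lambda>y. ennreal (\<rho> y))) (ball x e) > 0"
    and "bounded E"
    and "E \<in> sets lborel"
  shows "\<forall>\<epsilon>>0. \<exists>A. (\<forall>m.
            A m \<in> sets (PiM {..<m} (\<lambda>_. density lborel (\<lambda>y. ennreal (\<rho> y)))) \<and>
            {X \<in> space (PiM {..<m} (\<lambda>_. density lborel (\<lambda>y. ennreal (\<rho> y)))).
               max_cell_diam E (X ` {..<m}) > ereal \<epsilon>} \<subseteq> A m) \<and>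
          (\<lambda>m. measure (PiM {..<m} (\<lambda>_. density lborel (\<lambda>y. ennreal (\<rho> y)))) (A m))
             \<longlonglongrightarrow> 0"
proof -
  define M where "M = density lborel (\<lambda>y. ennreal (\<rho> y))"
  have spM: "space M = UNIV" by (simp add: M_def)
  have setsM: "sets M = sets borel" by (simp add: M_def)
  have "emeasure M (space M) = (\<integral>\<^sup>+ y. ennreal (\<rho> y) \<partial>lborel)"
    unfolding M_def using assms(1) by (subst emeasure_density) auto
  also have "\<dots> = ennreal (integral\<^sup>L lborel \<rho>)"
    using assms(2,3) by (intro nn_integral_eq_integral) auto
  finally have "emeasure M (space M) = 1" using assms(4) by simp
  hence PM: "prob_space M" by (rule prob_spaceI)
  interpret prob_space M by (rule PM)
  have posM: "\<And>c e. e > 0 \<Longrightarrow> measure M (ball c e) > 0"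
    using assms(5) by (simp add: M_def[symmetric] emeasure_eq_measure)
  obtain R where R: "\<forall>x\<in>E. norm x \<le> R" using assms(6) bounded_iff by blast
  hence ER: "E \<subseteq> cball 0 R" by auto
  have main: "\<exists>A. (\<forall>m.
            A m \<in> sets (PiM {..<m} (\<lambda>_. M)) \<and>
            {X \<in> space (PiM {..<m} (\<lambda>_. M)).
               max_cell_diam E (X ` {..<m}) > ereal \<epsilon>} \<subseteq> A m) \<and>
          (\<lambda>m. measure (PiM {..<m} (\<lambda>_. M)) (A m)) \<longlonglongrightarrow> 0" if "\<epsilon> > 0" for \<epsilon> :: real
  proof -
    define \<delta> where "\<delta> = \<epsilon> / 4"
    have d: "\<delta> > 0" using that by (simp add: \<delta>_def)
    obtain k where k: "finite k" "cball (0::'a) (R + 3*\<delta>) \<subseteq> (\<Union>c\<in>k. ball c (\<delta>/2))"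
      using seq_compact_imp_totally_bounded[OF compact_imp_seq_compact[OF compact_cball[of "0::'a" "R + 3*\<delta>"]]] d
      by (metis half_gt_zero)
    define B where "B c = UNIV - ball c (\<delta>/2)" for c :: 'a
    have Bs: "B c \<in> sets M" for c by (simp add: B_def setsM)
    define A where "A m = (\<Union>c\<in>k. {x\<in>space (PiM {..<m} (\<lambda>_. M)). \<forall>i\<in>{..<m}. x i \<in> B c})" for m :: nat
    have Asets: "A m \<in> sets (PiM {..<m} (\<lambda>_. M))" for m
      unfolding A_def by (rule sets.finite_UN[OF k(1)]) (rule pow_set(1)[OF PM Bs])
    have Asub: "{X \<in> space (PiM {..<m} (\<lambda>_. M)). max_cell_diam E (X ` {..<m}) > ereal \<epsilon>} \<subseteq> A m" for m
    proof
      fix X assume X: "X \<in> {X \<in> space (PiM {..<m} (\<lambda>_. M)). max_cell_diam E (X ` {..<m}) > ereal \<epsilon>}"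
      show "X \<in> A m"
      proof (rule ccontr)
        assume "X \<notin> A m"
        hence hit: "\<forall>c\<in>k. \<exists>i<m. X i \<in> ball c (\<delta>/2)" using X by (auto simp: A_def B_def)
        have dense: "\<forall>w. norm w \<le> R + 3*\<delta> \<longrightarrow> (\<exists>q\<in>X ` {..<m}. dist w q < \<delta>)"
        proof (intro allI impI)
          fix w :: 'a assume "norm w \<le> R + 3*\<delta>"
          then obtain c where c: "c \<in> k" "dist c w < \<delta>/2" using k(2) by (force simp: dist_norm)
          then obtain i where i: "i < m" "dist c (X i) < \<delta>/2" using hit by auto
          have "dist w (X i) \<le> dist w c + dist c (X i)" by (rule dist_triangle)
          hence "dist w (X i) < \<delta>" using c i by (simp add: dist_commute)
          thus "\<exists>q\<in>X ` {..<m}. dist w q < \<delta>" using i by auto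
        qed
        have "max_cell_diam E (X ` {..<m}) \<le> ereal \<epsilon>"
          unfolding max_cell_diam_def
        proof (rule Sup_least)
          fix e assume "e \<in> {ediam (voronoi_cell (X ` {..<m}) p) | p. p \<in> X ` {..<m} \<and> voronoi_cell (X ` {..<m}) p \<inter> E \<noteq> {}}"
          then obtain p where p: "p \<in> X ` {..<m}" "voronoi_cell (X ` {..<m}) p \<inter> E \<noteq> {}"
            and ee: "e = ediam (voronoi_cell (X ` {..<m}) p)" by blast
          from p obtain x where x: "x \<in> voronoi_cell (X ` {..<m}) p" "x \<in> E" by auto
          show "e \<le> ereal \<epsilon>"
            unfolding ee ediam_def
          proof (rule Sup_least)
            fix d assume "d \<in> {ereal (dist x y) | x y. x \<in> voronoi_cell (X ` {..<m}) p \<and> y \<in> voronoi_cell (X ` {..<m}) p}"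
            then obtain y1 y2 where y: "y1 \<in> voronoi_cell (X ` {..<m}) p" "y2 \<in> voronoi_cell (X ` {..<m}) p"
              and dd: "d = ereal (dist y1 y2)" by blast
            have "dist y1 p \<le> 2*\<delta>" by (rule cell_small[OF ER d dense p(1) x y(1)])
            moreover have "dist y2 p \<le> 2*\<delta>" by (rule cell_small[OF ER d dense p(1) x y(2)])
            moreover have "dist y1 y2 \<le> dist y1 p + dist y2 p" by (metis dist_commute dist_triangle)
            ultimately show "d \<le> ereal \<epsilon>" by (simp add: dd \<delta>_def)
          qed
        qed
        thus False using X by auto
      qed
    qed
    have bound: "measure (PiM {..<m} (\<lambda>_. M)) (A m) \<le> (\<Sum>c\<in>k. (1 - measure M (ball c (\<delta>/2))) ^ m)" for m
    proof -
      have "measure (PiM {..<m} (\<lambda>_. M)) (A m) \<le>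
            (\<Sum>c\<in>k. measure (PiM {..<m} (\<lambda>_. M)) {x\<in>space (PiM {..<m} (\<lambda>_. M)). \<forall>i\<in>{..<m}. x i \<in> B c})"
        unfolding A_def by (rule measure_UNION_le[OF k(1)]) (rule pow_set(1)[OF PM Bs])
      also have "\<dots> = (\<Sum>c\<in>k. (1 - measure M (ball c (\<delta>/2))) ^ m)"
      proof (rule sum.cong[OF refl])
        fix c
        have "measure M (B c) = 1 - measure M (ball c (\<delta>/2))"
          unfolding B_def using prob_compl[of "ball c (\<delta>/2)"] by (simp add: spM setsM)
        thus "measure (PiM {..<m} (\<lambda>_. M)) {x\<in>space (PiM {..<m} (\<lambda>_. M)). \<forall>i\<in>{..<m}. x i \<in> B c}
             = (1 - measure M (ball c (\<delta>/2))) ^ m"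
          using pow_set(2)[OF PM Bs] by simp
      qed
      finally show ?thesis .
    qed
    have lim: "(\<lambda>m. \<Sum>c\<in>k. (1 - measure M (ball c (\<delta>/2))) ^ m) \<longlonglongrightarrow> 0"
    proof (rule tendsto_null_sum)
      fix c assume "c \<in> k"
      have "measure M (ball c (\<delta>/2)) > 0" using posM d by simp
      moreover have "measure M (ball c (\<delta>/2)) \<le> 1" by simp
      ultimately have "norm (1 - measure M (ball c (\<delta>/2))) < 1" by simp
      thus "(\<lambda>m. (1 - measure M (ball c (\<delta>/2))) ^ m) \<longlonglongrightarrow> 0" by (rule LIMSEQ_power_zero)
    qed
    have "(\<lambda>m. measure (PiM {..<m} (\<lambda>_. M)) (A m)) \<longlonglongrightarrow> 0"
      by (rule tendsto_sandwich[OF _ _ tendsto_const lim]) (simp_all add: bound always_eventually)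
    thus ?thesis using Asets Asub by blast
  qed
  thus ?thesis by (simp add: M_def)
qed

end
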